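(* Let $\mathcal N_1$ and $\mathcal N_2$ be complex manifolds, with $\mathcal N_1$ weakly doubly-transitive, and let $\Phi:E(\mathcal N_1)\to E(\mathcal N_2)$ be an epimorphism of semigroups. Then there exists a bijective map $\Psi:\mathcal N_1\to\mathcal N_2$ such that $\Phi(f)=\Psi\circ f\circ\Psi^{-1}$ for all $f\in E(\mathcal N_1)$.
   Context: For a complex manifold $\mathcal N$, $E(\mathcal N)$ denotes the semigroup under composition of all holomorphic maps $\mathcal N\to\mathcal N$; an epimorphism is a surjective semigroup homomorphism (no continuity assumed, and $\Psi$ is not claimed continuous). $\mathcal N$ is weakly doubly-transitive if for every pair of distinct points $z_1,z_2\in\mathcal N$ and every $w_1\in\mathcal N$ there is a neighborhood $U$ of $w_1$ such that for every $w_2\in U$ there exists $f\in E(\mathcal N)$ with $f(z_1)=w_1$ and $f(z_2)=w_2$. *)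

theory Defs
  imports "HOL-Analysis.Analysis"
begin

definition cholo_on :: "(complex^'n \<Rightarrow> complex^'m) \<Rightarrow> (complex^'n) set \<Rightarrow> bool" where
  "cholo_on f S \<longleftrightarrow>
     (\<forall>x\<in>S. \<exists>L. (f has_derivative L) (at x) \<and> (\<forall>c v. L (c *s v) = c *s L v))"

definition complex_atlas :: "('a::topological_space set \<times> ('a \<Rightarrow> complex^'n)) set \<Rightarrow> bool" where
  "complex_atlas A \<longleftrightarrow>
     (\<forall>(U,\<phi>)\<in>A. open U \<and> open (\<phi> ` U) \<and> (\<exists>\<psi>. homeomorphism U (\<phi> ` U) \<phi> \<psi>)) \<and>
     (\<Union>(U,\<phi>)\<in>A. U) = UNIV \<and>
     (\<forall>(U,\<phi>)\<in>A. \<forall>(V,\<psi>)\<in>A. cholo_on (\<psi> \<circ> inv_into U \<phi>) (\<phi> ` (U \<inter> V)))"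

definition holo_map ::
  "('a::topological_space set \<times> ('a \<Rightarrow> complex^'n)) set \<Rightarrow>
   ('b::topological_space set \<times> ('b \<Rightarrow> complex^'m)) set \<Rightarrow> ('a \<Rightarrow> 'b) \<Rightarrow> bool" where
  "holo_map A B f \<longleftrightarrow> continuous_on UNIV f \<and>
     (\<forall>(U,\<phi>)\<in>A. \<forall>(V,\<psi>)\<in>B. cholo_on (\<psi> \<circ> f \<circ> inv_into U \<phi>) (\<phi> ` (U \<inter> f -` V)))"

definition End_hol :: "('a::topological_space set \<times> ('a \<Rightarrow> complex^'n)) set \<Rightarrow> ('a \<Rightarrow> 'a) set" where
  "End_hol A = {f. holo_map A A f}"

definition weakly_doubly_transitive ::
  "('a::topological_space set \<times> ('a \<Rightarrow> complex^'n)) set \<Rightarrow> bool" where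
  "weakly_doubly_transitive A \<longleftrightarrow>
     (\<forall>z1 z2 w1. z1 \<noteq> z2 \<longrightarrow>
        (\<exists>U. open U \<and> w1 \<in> U \<and>
           (\<forall>w2\<in>U. \<exists>f\<in>End_hol A. f z1 = w1 \<and> f z2 = w2)))"

definition semigroup_epi :: "('a \<Rightarrow> 'a) set \<Rightarrow> ('b \<Rightarrow> 'b) set \<Rightarrow> (('a \<Rightarrow> 'a) \<Rightarrow> ('b \<Rightarrow> 'b)) \<Rightarrow> bool" where
  "semigroup_epi E1 E2 \<Phi> \<longleftrightarrow> \<Phi> ` E1 = E2 \<and>
     (\<forall>f\<in>E1. \<forall>g\<in>E1. \<Phi> (f \<circ> g) = \<Phi> f \<circ> \<Phi> g)"

end

theory Submission
  imports Defs
begin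

lemma const_End: "(\<lambda>_. c) \<in> End_hol A"
proof -
  have "cholo_on (\<lambda>_. d) S" for d :: "complex^'m" and S :: "(complex^'n) set"
    unfolding cholo_on_def
    by (intro ballI exI[of _ "\<lambda>_. 0"]) auto
  then show ?thesis
    unfolding End_hol_def holo_map_def
    by (auto simp: o_def)
qed

lemma atlas_uncountable:
  fixes A :: "('b::topological_space set \<times> ('b \<Rightarrow> complex^'m)) set"
  assumes "complex_atlas A"
  shows "uncountable (UNIV :: 'b set)"
proof -
  obtain x :: 'b where True by auto
  from assms have "x \<in> (\<Union>(U,\<phi>)\<in>A. U)" unfolding complex_atlas_def by auto
  then obtain U \<phi> where UA: "(U,\<phi>) \<in> A" "x \<in> U" by auto
  with assms have op: "open (\<phi> ` U)" unfolding complex_atlas_def by auto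
  have "\<phi> x \<in> \<phi> ` U" using UA by auto
  with op obtain r where r: "r > 0" "ball (\<phi> x) r \<subseteq> \<phi> ` U"
    by (meson open_contains_ball)
  have "uncountable (ball (\<phi> x) r)" using r uncountable_ball by blast
  then have "uncountable (\<phi> ` U)" using r(2) countable_subset by metis
  then have "uncountable U" using countable_image by blast
  then show ?thesis by (metis countable_subset subset_UNIV)
qed

theorem lemma2:
  fixes A1 :: "('a::{t2_space,second_countable_topology} set \<times> ('a \<Rightarrow> complex^'n)) set"
    and A2 :: "('b::{t2_space,second_countable_topology} set \<times> ('b \<Rightarrow> complex^'m)) set"
    and \<Phi> :: "('a \<Rightarrow> 'a) \<Rightarrow> ('b \<Rightarrow> 'b)"
  assumes "complex_atlas A1" and "complex_atlas A2"
    and "weakly_doubly_transitive A1"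
    and "semigroup_epi (End_hol A1) (End_hol A2) \<Phi>"
  shows "\<exists>\<Psi> :: 'a \<Rightarrow> 'b. bij \<Psi> \<and> (\<forall>f\<in>End_hol A1. \<Phi> f = \<Psi> \<circ> f \<circ> inv \<Psi>)"
proof -
  have e: "\<Phi> ` End_hol A1 = End_hol A2 \<and> (\<forall>f\<in>End_hol A1. \<forall>g\<in>End_hol A1. \<Phi> (f \<circ> g) = \<Phi> f \<circ> \<Phi> g)"
    using assms(4) unfolding semigroup_epi_def .
  have img: "\<Phi> ` End_hol A1 = End_hol A2" using e by (rule conjunct1)
  have hom: "\<Phi> (f \<circ> g) = \<Phi> f \<circ> \<Phi> g" if "f \<in> End_hol A1" "g \<in> End_hol A1" for f g
    using e that by blast
  define \<Psi> where "\<Psi> a = \<Phi> (\<lambda>_. a) undefined" for a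
  have cst: "\<Phi> (\<lambda>_. a) = (\<lambda>_. \<Psi> a)" for a
  proof -
    have lz: "\<Phi> (\<lambda>_. a) \<circ> g = \<Phi> (\<lambda>_. a)" if "g \<in> End_hol A2" for g
    proof -
      have "g \<in> \<Phi> ` End_hol A1" using img that by (rule ssubst)
      then obtain f where f: "f \<in> End_hol A1" "g = \<Phi> f" by (rule imageE) 
      have c: "(\<lambda>_. a) \<circ> f = (\<lambda>_. a)" by (rule ext) (simp only: comp_apply)
      have "\<Phi> (\<lambda>_. a) \<circ> g = \<Phi> (\<lambda>_. a) \<circ> \<Phi> f" using f(2) by (rule arg_cong)
      also have "\<dots> = \<Phi> ((\<lambda>_. a) \<circ> f)" using hom[OF const_End[of a] f(1)] by (rule sym)
      also have "\<dots> = \<Phi> (\<lambda>_. a)" using c by (rule arg_cong)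
      finally show ?thesis .
    qed
    have lz2: "\<Phi> (\<lambda>_. a) \<circ> (\<lambda>_. undefined) = \<Phi> (\<lambda>_. a)" by (rule lz[OF const_End])
    have "\<Phi> (\<lambda>_. a) y = \<Phi> (\<lambda>_. a) undefined" for y
    proof -
      have "\<Phi> (\<lambda>_. a) y = (\<Phi> (\<lambda>_. a) \<circ> (\<lambda>_. undefined)) y" using lz2 by (rule sym[THEN fun_cong])
      also have "\<dots> = \<Phi> (\<lambda>_. a) undefined" by (simp only: comp_apply)
      finally show ?thesis .
    qed
    then show ?thesis unfolding \<Psi>_def by (rule ext)
  qed
  have key: "\<Phi> f (\<Psi> x) = \<Psi> (f x)" if "f \<in> End_hol A1" for f x
  proof -
    have "\<Phi> (f \<circ> (\<lambda>_. x)) = \<Phi> f \<circ> \<Phi> (\<lambda>_. x)" using hom[OF that const_End] .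
    moreover have "f \<circ> (\<lambda>_. x) = (\<lambda>_. f x)" by auto
    ultimately have "(\<lambda>_. \<Psi> (f x)) = (\<lambda>_::'b. \<Phi> f (\<Psi> x))" by (simp add: cst o_def)
    then show ?thesis by (metis)
  qed
  have surj: "surj \<Psi>"
  proof -
    have "y \<in> range \<Psi>" for y
    proof -
      have "(\<lambda>_. y) \<in> \<Phi> ` End_hol A1" using img const_End by simp
      then obtain g where g: "g \<in> End_hol A1" "(\<lambda>_. y) = \<Phi> g" by blast
      have "\<Phi> g (\<Psi> undefined) = \<Psi> (g undefined)" using key g by blast
      then have "y = \<Psi> (g undefined)" using g(2)[symmetric] by simp
      then show ?thesis by blast
    qed
    then show ?thesis by blast
  qed
  have inj: "inj \<Psi>"
  proof (rule injI, rule ccontr)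
    fix a b assume ab: "\<Psi> a = \<Psi> b" "a \<noteq> b"
    have loc: "\<exists>U. open U \<and> w \<in> U \<and> (\<forall>w2\<in>U. \<Psi> w2 = \<Psi> w)" for w
    proof -
      have "\<forall>z1 z2 w1. z1 \<noteq> z2 \<longrightarrow> (\<exists>U. open U \<and> w1 \<in> U \<and>
           (\<forall>w2\<in>U. \<exists>f\<in>End_hol A1. f z1 = w1 \<and> f z2 = w2))"
        using assms(3) unfolding weakly_doubly_transitive_def .
      then have "\<exists>U. open U \<and> w \<in> U \<and> (\<forall>w2\<in>U. \<exists>f\<in>End_hol A1. f a = w \<and> f b = w2)"
        using ab(2) by blast
      then obtain U where U: "open U" "w \<in> U" "\<forall>w2\<in>U. \<exists>f\<in>End_hol A1. f a = w \<and> f b = w2"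
        by blast
      have "\<Psi> w2 = \<Psi> w" if "w2 \<in> U" for w2
      proof -
        have "\<exists>f\<in>End_hol A1. f a = w \<and> f b = w2" using U(3) that by (rule bspec)
        then obtain f where f0: "f \<in> End_hol A1" "f a = w \<and> f b = w2" by (rule bexE)
        have f: "f \<in> End_hol A1" "f a = w" "f b = w2" using f0 by auto
        have "\<Psi> (f a) = \<Phi> f (\<Psi> a)" using key[OF f(1), of a] by (rule sym)
        also have "\<dots> = \<Phi> f (\<Psi> b)" by (simp only: ab(1))
        also have "\<dots> = \<Psi> (f b)" using key[OF f(1), of b] .
        finally show ?thesis using f(2,3) by metis
      qed
      then show ?thesis using U(1,2) by blast
    qed
    define F where "F = {U::'a set. open U \<and> (\<forall>x\<in>U. \<forall>y\<in>U. \<Psi> x = \<Psi> y)}"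
    have cov0: "w \<in> \<Union>F" for w
    proof -
      obtain U where U0: "open U \<and> w \<in> U \<and> (\<forall>w2\<in>U. \<Psi> w2 = \<Psi> w)" using loc[of w] by (rule exE)
      have U: "open U" "w \<in> U" "\<forall>w2\<in>U. \<Psi> w2 = \<Psi> w" using U0 by (rule conjunct1, rule conjunct1[OF conjunct2], rule conjunct2[OF conjunct2])
      have "\<forall>x\<in>U. \<forall>y\<in>U. \<Psi> x = \<Psi> y"
      proof (intro ballI)
        fix x y assume "x \<in> U" "y \<in> U"
        have "\<Psi> x = \<Psi> w" using U(3) \<open>x \<in> U\<close> by (rule bspec)
        moreover have "\<Psi> y = \<Psi> w" using U(3) \<open>y \<in> U\<close> by (rule bspec)
        ultimately show "\<Psi> x = \<Psi> y" by (rule trans[OF _ sym])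
      qed
      then have "U \<in> F" unfolding F_def mem_Collect_eq using U(1) by (intro conjI)
      then show ?thesis using U(2) by (rule UnionI)
    qed
    have "\<And>S. S \<in> F \<Longrightarrow> open S" unfolding F_def by blast
    then obtain F' where F': "F' \<subseteq> F" "countable F'" "\<Union>F' = \<Union>F"
      by (rule Lindelof)
    have sub: "UNIV \<subseteq> (\<Union>U\<in>F'. \<Psi> ` U)"
    proof
      fix y :: 'b
      obtain x where x: "y = \<Psi> x" using surj by (metis surjD)
      have "x \<in> \<Union>F'" using cov0 F'(3) by simp
      then obtain U where "U \<in> F'" "x \<in> U" by (rule UnionE)
      then show "y \<in> (\<Union>U\<in>F'. \<Psi> ` U)" using x by blast
    qed
    have "countable (\<Psi> ` U)" if "U \<in> F'" for U
    proof -
      have UF: "\<forall>x\<in>U. \<forall>y\<in>U. \<Psi> x = \<Psi> y" using subsetD[OF F'(1) that] unfolding F_def mem_Collect_eq by (rule conjunct2)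
      have "\<Psi> ` U \<subseteq> {\<Psi> (SOME x. x \<in> U)}"
      proof
        fix z assume "z \<in> \<Psi> ` U"
        then obtain x where x: "x \<in> U" "z = \<Psi> x" by blast
        have "(SOME x. x \<in> U) \<in> U" using x(1) by (rule someI)
        then have "\<Psi> x = \<Psi> (SOME x. x \<in> U)" by (rule bspec[OF bspec[OF UF x(1)]])
        then show "z \<in> {\<Psi> (SOME x. x \<in> U)}" using x(2) by (simp only: singleton_iff)
      qed
      then show ?thesis by (rule countable_subset) simp
    qed
    then have "countable (\<Union>U\<in>F'. \<Psi> ` U)" using F'(2) by (intro countable_UN) 
    then have "countable (UNIV :: 'b set)" using sub countable_subset by metis
    then show False using atlas_uncountable[OF assms(2)] by blast
  qed
  have bij: "bij \<Psi>" using inj surj by (simp add: bij_def)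
  have "\<Phi> f = \<Psi> \<circ> f \<circ> inv \<Psi>" if "f \<in> End_hol A1" for f
  proof
    fix y
    have "y = \<Psi> (inv \<Psi> y)" using surj by (simp add: surj_f_inv_f)
    then have "\<Phi> f y = \<Phi> f (\<Psi> (inv \<Psi> y))" by (rule arg_cong)
    also have "\<dots> = \<Psi> (f (inv \<Psi> y))" using key[OF that] .
    finally show "\<Phi> f y = (\<Psi> \<circ> f \<circ> inv \<Psi>) y" by (simp only: comp_apply)
  qed
  then show ?thesis using bij by blast
qed

end
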